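(* For groupoid terms $p$ and $q$ in a set of variables $X$, the identity $p=q$ is in $\Sigma_{2,4}$ iff $[p]-[q]=\sum_{x\in X}\big(m_x(\alpha+\gamma)+n_x(\beta+1)\big)x$ for some integers $m_x,n_x$.
   Context: $\Sigma_{2,4}$ is the set of groupoid identities satisfied in $\mathbb{Z}$ by both operations $x-y$ and $-x-y$. Let $\mathbf{KL}=\{1,\alpha,\beta,\gamma\}$ be the Klein 4-group ($\alpha^2=\beta^2=1$, $\alpha\beta=\gamma$). For a term $p$ in variables $X$, $[p]$ denotes the element of the free $\mathbb{Z}[\mathbf{KL}]$-module on $X$ obtained by evaluating $p$ with the product $uv$ interpreted as $\alpha u+\beta v$. *)

theory Defs
  imports "HOL-Library.Function_Algebras"
begin

datatype 'v gterm = Var 'v | Op "'v gterm" "'v gterm"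

fun geval :: "(int \<Rightarrow> int \<Rightarrow> int) \<Rightarrow> ('v \<Rightarrow> int) \<Rightarrow> 'v gterm \<Rightarrow> int" where
  "geval f \<rho> (Var x) = \<rho> x"
| "geval f \<rho> (Op u v) = f (geval f \<rho> u) (geval f \<rho> v)"

definition holds_in_Z :: "(int \<Rightarrow> int \<Rightarrow> int) \<Rightarrow> 'v gterm \<Rightarrow> 'v gterm \<Rightarrow> bool" where
  "holds_in_Z f p q \<longleftrightarrow> (\<forall>\<rho>. geval f \<rho> p = geval f \<rho> q)"

definition Sigma24 :: "('v gterm \<times> 'v gterm) set" where
  "Sigma24 = {(p, q). holds_in_Z (\<lambda>x y. x - y) p q \<and> holds_in_Z (\<lambda>x y. - x - y) p q}"

datatype KL = KL1 | KL\<alpha> | KL\<beta> | KL\<gamma>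

fun klmult :: "KL \<Rightarrow> KL \<Rightarrow> KL" where
  "klmult KL1 g = g"
| "klmult g KL1 = g"
| "klmult KL\<alpha> KL\<alpha> = KL1"
| "klmult KL\<beta> KL\<beta> = KL1"
| "klmult KL\<gamma> KL\<gamma> = KL1"
| "klmult KL\<alpha> KL\<beta> = KL\<gamma>"
| "klmult KL\<beta> KL\<alpha> = KL\<gamma>"
| "klmult KL\<alpha> KL\<gamma> = KL\<beta>"
| "klmult KL\<gamma> KL\<alpha> = KL\<beta>"
| "klmult KL\<beta> KL\<gamma> = KL\<alpha>"
| "klmult KL\<gamma> KL\<beta> = KL\<alpha>"

definition KL_elems :: "KL set" where
  "KL_elems = {KL1, KL\<alpha>, KL\<beta>, KL\<gamma>}"

text \<open>Elements of Z[KL] are functions KL => int (coefficient of each group element).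
  Every element of KL is its own inverse, so the convolution product is
  (a*b)(g) = sum_h a(h) b(h g).\<close>
type_synonym ZKL = "KL \<Rightarrow> int"

definition zkl_mult :: "ZKL \<Rightarrow> ZKL \<Rightarrow> ZKL" where
  "zkl_mult a b = (\<lambda>g. \<Sum>h\<in>KL_elems. a h * b (klmult h g))"

definition zkl_of :: "KL \<Rightarrow> ZKL" where
  "zkl_of g = (\<lambda>h. if h = g then 1 else 0)"

text \<open>Free Z[KL]-module on the variables 'v: coefficient functions 'v => Z[KL]
  (elements arising from terms are finitely supported).\<close>
type_synonym 'v ZKLmod = "'v \<Rightarrow> ZKL"

definition mod_smul :: "ZKL \<Rightarrow> 'v ZKLmod \<Rightarrow> 'v ZKLmod" where
  "mod_smul r f = (\<lambda>x. zkl_mult r (f x))"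

definition mod_gen :: "'v \<Rightarrow> 'v ZKLmod" where
  "mod_gen x = (\<lambda>y. if y = x then zkl_of KL1 else (\<lambda>_. 0))"

fun bracket :: "'v gterm \<Rightarrow> 'v ZKLmod" where
  "bracket (Var x) = mod_gen x"
| "bracket (Op u v) = mod_smul (zkl_of KL\<alpha>) (bracket u) + mod_smul (zkl_of KL\<beta>) (bracket v)"

end

theory Submission
  imports Defs
begin

definition chi :: "int \<Rightarrow> int \<Rightarrow> ZKL \<Rightarrow> int" where
  "chi a b c = c KL1 + a * c KL\<alpha> + b * c KL\<beta> + a * b * c KL\<gamma>"

lemma KL_elems_sum: "(\<Sum>h\<in>KL_elems. F h) = F KL1 + F KL\<alpha> + F KL\<beta> + F KL\<gamma>"
  by (simp add: KL_elems_def add.assoc)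

lemma fin_set_gterm: "finite (set_gterm p)"
  by (induction p) auto

lemma bracket_Op_x: "bracket (Op u v) x = zkl_mult (zkl_of KL\<alpha>) (bracket u x) + zkl_mult (zkl_of KL\<beta>) (bracket v x)"
  by (simp add: mod_smul_def)

lemma mult_a: "zkl_mult (zkl_of KL\<alpha>) c = (\<lambda>g. c (klmult KL\<alpha> g))"
  by (rule ext) (simp add: zkl_mult_def KL_elems_sum zkl_of_def)

lemma mult_b: "zkl_mult (zkl_of KL\<beta>) c = (\<lambda>g. c (klmult KL\<beta> g))"
  by (rule ext) (simp add: zkl_mult_def KL_elems_sum zkl_of_def)

lemma chi_a: "a * a = 1 \<Longrightarrow> chi a b (zkl_mult (zkl_of KL\<alpha>) c) = a * chi a b c"
  unfolding mult_a chi_def by (simp add: algebra_simps) (metis mult.assoc mult_1)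

lemma chi_b: "b * b = 1 \<Longrightarrow> chi a b (zkl_mult (zkl_of KL\<beta>) c) = b * chi a b c"
  unfolding mult_b chi_def by (simp add: algebra_simps) (metis mult.assoc mult.commute mult_1)

lemma chi_add: "chi a b (c + d) = chi a b c + chi a b d"
  by (simp add: chi_def algebra_simps)

lemma chi_diff: "chi a b (c - d) = chi a b c - chi a b d"
  by (simp add: chi_def algebra_simps)

lemma geval_sum:
  assumes f: "\<And>u v. f u v = a * u + b * v" and a: "a * a = 1" and b: "b * b = 1"
    and S: "finite S" "set_gterm p \<subseteq> S"
  shows "geval f \<rho> p = (\<Sum>x\<in>S. chi a b (bracket p x) * \<rho> x)"
  using S(2)
proof (induction p)
  case (Var y)
  have "(\<Sum>x\<in>S. chi a b (mod_gen y x) * \<rho> x) = (\<Sum>x\<in>S. if x = y then \<rho> x else 0)"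
    by (rule sum.cong) (auto simp: mod_gen_def chi_def zkl_of_def)
  also have "\<dots> = \<rho> y" using Var S(1) by (simp add: sum.delta)
  finally show ?case by simp
next
  case (Op u v)
  then have IH: "geval f \<rho> u = (\<Sum>x\<in>S. chi a b (bracket u x) * \<rho> x)"
    "geval f \<rho> v = (\<Sum>x\<in>S. chi a b (bracket v x) * \<rho> x)" by auto
  have "geval f \<rho> (Op u v) = a * geval f \<rho> u + b * geval f \<rho> v" by (simp add: f)
  also have "\<dots> = (\<Sum>x\<in>S. (a * chi a b (bracket u x) + b * chi a b (bracket v x)) * \<rho> x)"
    by (simp add: IH sum_distrib_left sum.distrib algebra_simps)
  also have "\<dots> = (\<Sum>x\<in>S. chi a b (bracket (Op u v) x) * \<rho> x)"
    unfolding bracket_Op_x chi_add chi_a[OF a] chi_b[OF b] ..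
  finally show ?case .
qed

lemma holds_iff:
  assumes f: "\<And>u v. f u v = a * u + b * v" and a: "a * a = 1" and b: "b * b = 1"
  shows "holds_in_Z f p q \<longleftrightarrow> (\<forall>x. chi a b (bracket p x - bracket q x) = 0)"
proof -
  let ?S = "set_gterm p \<union> set_gterm q"
  have fin: "finite ?S" by (simp add: fin_set_gterm)
  have E: "geval f \<rho> p - geval f \<rho> q = (\<Sum>x\<in>?S. chi a b (bracket p x - bracket q x) * \<rho> x)" for \<rho>
    using geval_sum[OF f a b fin, of p \<rho>] geval_sum[OF f a b fin, of q \<rho>]
    by (simp add: chi_diff sum_subtractf[symmetric] algebra_simps)
  show ?thesis
  proof
    assume h: "holds_in_Z f p q"
    show "\<forall>x. chi a b (bracket p x - bracket q x) = 0"
    proof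
      fix x
      show "chi a b (bracket p x - bracket q x) = 0"
      proof (cases "x \<in> ?S")
        case True
        have "0 = (\<Sum>y\<in>?S. chi a b (bracket p y - bracket q y) * (if y = x then 1 else 0))"
          using E[of "\<lambda>y. if y = x then 1 else 0"] h by (simp add: holds_in_Z_def)
        also have "\<dots> = (\<Sum>y\<in>?S. if y = x then chi a b (bracket p y - bracket q y) else 0)"
          by (rule sum.cong) auto
        also have "\<dots> = chi a b (bracket p x - bracket q x)" using True fin by (simp add: sum.delta)
        finally show ?thesis by simp
      next
        case False
        have Z: "bracket r x = 0" if "x \<notin> set_gterm r" for r :: "'a gterm"
          using that by (induction r) (auto simp: mod_gen_def mod_smul_def zkl_mult_def zero_fun_def)
        show ?thesis using False Z[of p] Z[of q] by (simp add: chi_def)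
      qed
    qed
  next
    assume "\<forall>x. chi a b (bracket p x - bracket q x) = 0"
    then show "holds_in_Z f p q" using E by (simp add: holds_in_Z_def)
  qed
qed

theorem lemma3p1:
  fixes p q :: "'v gterm"
  shows "(p, q) \<in> Sigma24 \<longleftrightarrow>
    (\<exists>m n :: 'v \<Rightarrow> int. \<forall>x.
       bracket p x - bracket q x =
         (\<lambda>g. m x * (zkl_of KL\<alpha> g + zkl_of KL\<gamma> g) + n x * (zkl_of KL\<beta> g + zkl_of KL1 g)))"
proof -
  have h1: "holds_in_Z (\<lambda>x y. x - y) p q \<longleftrightarrow> (\<forall>x. chi 1 (-1) (bracket p x - bracket q x) = 0)"
    by (rule holds_iff) auto
  have h2: "holds_in_Z (\<lambda>x y. - x - y) p q \<longleftrightarrow> (\<forall>x. chi (-1) (-1) (bracket p x - bracket q x) = 0)"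
    by (rule holds_iff) auto
  have key: "(chi 1 (-1) d = 0 \<and> chi (-1) (-1) d = 0) \<longleftrightarrow>
     (\<exists>m n. d = (\<lambda>g. m * (zkl_of KL\<alpha> g + zkl_of KL\<gamma> g) + n * (zkl_of KL\<beta> g + zkl_of KL1 g)))"
    for d :: ZKL
  proof
    assume "chi 1 (-1) d = 0 \<and> chi (-1) (-1) d = 0"
    then have e: "d KL1 = d KL\<beta>" "d KL\<alpha> = d KL\<gamma>" by (auto simp: chi_def)
    show "\<exists>m n. d = (\<lambda>g. m * (zkl_of KL\<alpha> g + zkl_of KL\<gamma> g) + n * (zkl_of KL\<beta> g + zkl_of KL1 g))"
      apply (rule exI[of _ "d KL\<alpha>"], rule exI[of _ "d KL1"], rule ext)
      subgoal for g using e by (cases g) (auto simp: zkl_of_def)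
      done
  next
    assume "\<exists>m n. d = (\<lambda>g. m * (zkl_of KL\<alpha> g + zkl_of KL\<gamma> g) + n * (zkl_of KL\<beta> g + zkl_of KL1 g))"
    then show "chi 1 (-1) d = 0 \<and> chi (-1) (-1) d = 0" by (auto simp: chi_def zkl_of_def)
  qed
  show ?thesis
  proof -
    have "(p, q) \<in> Sigma24 \<longleftrightarrow> (\<forall>x. chi 1 (-1) (bracket p x - bracket q x) = 0 \<and> chi (-1) (-1) (bracket p x - bracket q x) = 0)"
      unfolding Sigma24_def using h1 h2 by blast
    also have "\<dots> \<longleftrightarrow> (\<forall>x. \<exists>m n. bracket p x - bracket q x = (\<lambda>g. m * (zkl_of KL\<alpha> g + zkl_of KL\<gamma> g) + n * (zkl_of KL\<beta> g + zkl_of KL1 g)))"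
      using key by blast
    also have "\<dots> \<longleftrightarrow> (\<exists>m n :: 'v \<Rightarrow> int. \<forall>x.
       bracket p x - bracket q x =
         (\<lambda>g. m x * (zkl_of KL\<alpha> g + zkl_of KL\<gamma> g) + n x * (zkl_of KL\<beta> g + zkl_of KL1 g)))"
      (is "(\<forall>x. \<exists>m n. ?P x m n) \<longleftrightarrow> _")
    proof
      assume "\<forall>x. \<exists>m n. ?P x m n"
      then have "\<forall>x. \<exists>mn. ?P x (fst mn) (snd mn)" by simp
      then obtain c where "\<forall>x. ?P x (fst (c x)) (snd (c x))" by metis
      then show "\<exists>m n. \<forall>x. ?P x (m x) (n x)"
        by (intro exI[of _ "\<lambda>x. fst (c x)"] exI[of _ "\<lambda>x. snd (c x)"]) simp
    qed blast
    finally show ?thesis .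
  qed
qed

end
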